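(* If $r\ge 2$, then the glued binary tree $GT(r)$ satisfies ${\rm gp}_{\rm t}(GT(r))={\rm gp}_{\rm d}(GT(r))=0$.
   Context: A perfect binary tree of depth $r\ge1$ is a rooted tree in which every non-leaf vertex has exactly $2$ children and all leaves have depth $r$. The glued binary tree $GT(r)$ is obtained from two copies of the perfect binary tree of depth $r$ by pairwise identifying their leaves (via a fixed isomorphism of the copies). For $S\subseteq V(G)$, two vertices $u,v$ are $S$-positionable if every shortest $u,v$-path $P$ satisfies $V(P)\cap S\subseteq\{u,v\}$. $S$ is a general position set if every two vertices of $S$ are $S$-positionable; $S$ is a dual general position set if it is a general position set and every two vertices of $V(G)\setminus S$ are $S$-positionable; $S$ is a total general position set if every two vertices of $G$ are $S$-positionable. ${\rm gp}_{\rm d}(G)$ and ${\rm gp}_{\rm t}(G)$ are the maximum sizes of a dual, respectively total, general position set of $G$. *)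

theory Defs
  imports Main
begin

definition walk :: "('a \<Rightarrow> 'a \<Rightarrow> bool) \<Rightarrow> 'a list \<Rightarrow> bool" where
  "walk E xs \<longleftrightarrow> xs \<noteq> [] \<and> (\<forall>i. Suc i < length xs \<longrightarrow> E (xs ! i) (xs ! Suc i))"

definition gdist :: "('a \<Rightarrow> 'a \<Rightarrow> bool) \<Rightarrow> 'a \<Rightarrow> 'a \<Rightarrow> nat" where
  "gdist E u v = (LEAST n. \<exists>xs. walk E xs \<and> hd xs = u \<and> last xs = v \<and> length xs = Suc n)"

definition shortest_path :: "('a \<Rightarrow> 'a \<Rightarrow> bool) \<Rightarrow> 'a \<Rightarrow> 'a \<Rightarrow> 'a list \<Rightarrow> bool" where
  "shortest_path E u v P \<longleftrightarrow> walk E P \<and> hd P = u \<and> last P = v \<and> length P = Suc (gdist E u v)"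

definition positionable :: "('a \<Rightarrow> 'a \<Rightarrow> bool) \<Rightarrow> 'a set \<Rightarrow> 'a \<Rightarrow> 'a \<Rightarrow> bool" where
  "positionable E S u v \<longleftrightarrow> (\<forall>P. shortest_path E u v P \<longrightarrow> set P \<inter> S \<subseteq> {u, v})"

definition gp_set :: "'a set \<Rightarrow> ('a \<Rightarrow> 'a \<Rightarrow> bool) \<Rightarrow> 'a set \<Rightarrow> bool" where
  "gp_set V E S \<longleftrightarrow> S \<subseteq> V \<and> (\<forall>u\<in>S. \<forall>v\<in>S. positionable E S u v)"

definition dual_gp_set :: "'a set \<Rightarrow> ('a \<Rightarrow> 'a \<Rightarrow> bool) \<Rightarrow> 'a set \<Rightarrow> bool" where
  "dual_gp_set V E S \<longleftrightarrow> gp_set V E S \<and> (\<forall>u\<in>V - S. \<forall>v\<in>V - S. positionable E S u v)"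

definition total_gp_set :: "'a set \<Rightarrow> ('a \<Rightarrow> 'a \<Rightarrow> bool) \<Rightarrow> 'a set \<Rightarrow> bool" where
  "total_gp_set V E S \<longleftrightarrow> S \<subseteq> V \<and> (\<forall>u\<in>V. \<forall>v\<in>V. positionable E S u v)"

definition gp_d :: "'a set \<Rightarrow> ('a \<Rightarrow> 'a \<Rightarrow> bool) \<Rightarrow> nat" where
  "gp_d V E = Max {card S | S. dual_gp_set V E S}"

definition gp_t :: "'a set \<Rightarrow> ('a \<Rightarrow> 'a \<Rightarrow> bool) \<Rightarrow> nat" where
  "gp_t V E = Max {card S | S. total_gp_set V E S}"

text \<open>A vertex of the perfect binary tree of depth r is a binary word of length \<le> r
  (the root is []; the children of w are w@[b]). A vertex of GT(r) is a pair (c, w)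
  where c is the copy; leaves (length w = r) are identified across copies and
  represented with c = False.\<close>

definition GT_V :: "nat \<Rightarrow> (bool \<times> bool list) set" where
  "GT_V r = {(c, w). length w \<le> r \<and> (length w = r \<longrightarrow> c = False)}"

definition GT_child :: "nat \<Rightarrow> bool \<times> bool list \<Rightarrow> bool \<times> bool list \<Rightarrow> bool" where
  "GT_child r x y \<longleftrightarrow> (\<exists>b. snd y = snd x @ [b]) \<and> (fst y = fst x \<or> length (snd y) = r)"

definition GT_E :: "nat \<Rightarrow> bool \<times> bool list \<Rightarrow> bool \<times> bool list \<Rightarrow> bool" where
  "GT_E r x y \<longleftrightarrow> x \<in> GT_V r \<and> y \<in> GT_V r \<and> (GT_child r x y \<or> GT_child r y x)"

end

theory Submission
  imports Defs
begin

lemma E_len: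
  assumes "GT_E r x y"
  shows "length (snd y) = Suc (length (snd x)) \<or> length (snd x) = Suc (length (snd y))"
  using assms unfolding GT_E_def GT_child_def by auto

lemma E_sym: "GT_E r x y \<Longrightarrow> GT_E r y x"
  unfolding GT_E_def by auto

lemma gdist2:
  assumes "GT_E r y a" "GT_E r y b" "a \<noteq> b"
  shows "gdist (GT_E r) a b = 2"
  unfolding gdist_def
proof (rule Least_equality)
  have "walk (GT_E r) [a, y, b]"
    unfolding walk_def using assms E_sym
    by (auto simp: less_Suc_eq nth_Cons split: nat.splits)
  then show "\<exists>xs. walk (GT_E r) xs \<and> hd xs = a \<and> last xs = b \<and> length xs = Suc 2"
    by (intro exI[of _ "[a,y,b]"]) auto
next
  fix n assume "\<exists>xs. walk (GT_E r) xs \<and> hd xs = a \<and> last xs = b \<and> length xs = Suc n"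
  then obtain xs where xs: "walk (GT_E r) xs" "hd xs = a" "last xs = b" "length xs = Suc n" by blast
  have nE: "\<not> GT_E r a b"
  proof
    assume "GT_E r a b"
    from E_len[OF this] E_len[OF assms(1)] E_len[OF assms(2)] show False by linarith
  qed
  show "2 \<le> n"
  proof (rule ccontr)
    assume "\<not> 2 \<le> n"
    then have "n = 0 \<or> n = 1" by auto
    then show False
    proof
      assume "n = 0"
      then obtain z where "xs = [z]" using xs(4) by (cases xs) auto
      then show False using xs assms(3) by auto
    next
      assume "n = 1"
      then obtain z1 z2 where z: "xs = [z1, z2]" using xs(4)
        by (cases xs; cases "tl xs") auto
      then have "GT_E r z1 z2" using xs(1) unfolding walk_def by force
      then show False using z xs nE by auto
    qed
  qed
qed

lemma key:
  assumes d: "dual_gp_set (GT_V r) (GT_E r) S" and yS: "y \<in> S"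
    and ya: "GT_E r y a" and yb: "GT_E r y b" and ab: "a \<noteq> b"
    and side: "(a \<in> S \<and> b \<in> S) \<or> (a \<notin> S \<and> b \<notin> S)"
  shows False
proof -
  have V: "a \<in> GT_V r" "b \<in> GT_V r" using ya yb unfolding GT_E_def by auto
  have "positionable (GT_E r) S a b"
    using d side V unfolding dual_gp_set_def gp_set_def by auto
  moreover have "shortest_path (GT_E r) a b [a, y, b]"
  proof -
    have "walk (GT_E r) [a, y, b]"
      unfolding walk_def using ya yb E_sym
      by (auto simp: less_Suc_eq nth_Cons split: nat.splits)
    then show ?thesis unfolding shortest_path_def using gdist2[OF ya yb ab] by auto
  qed
  moreover have "y \<noteq> a" "y \<noteq> b" using E_len[OF ya] E_len[OF yb] by auto
  ultimately have "set [a, y, b] \<inter> S \<subseteq> {a, b}" "y \<noteq> a" "y \<noteq> b"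
    unfolding positionable_def by blast+
  then show False using yS by auto
qed

lemma internal:
  assumes d: "dual_gp_set (GT_V r) (GT_E r) S" and yS: "(c, w) \<in> S"
    and l: "0 < length w" "length w < r"
  shows False
proof -
  define c' where "c' = (if Suc (length w) = r then False else c)"
  have yV: "(c, w) \<in> GT_V r" using l unfolding GT_V_def by auto
  have p: "GT_E r (c, w) (c, butlast w)"
    using l yV unfolding GT_E_def GT_V_def GT_child_def
    by (auto intro!: exI[of _ "last w"] simp: append_butlast_last_id)
  have k: "GT_E r (c, w) (c', w @ [b])" for b
    using l yV unfolding GT_E_def GT_V_def GT_child_def c'_def by auto
  have d1: "(c, butlast w) \<noteq> (c', w @ [b])" for b
  proof
    assume "(c, butlast w) = (c', w @ [b])"
    then have "length (butlast w) = length (w @ [b])" by simp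
    then show False by simp
  qed
  have d2: "(c', w @ [True]) \<noteq> (c', w @ [False])" by auto
  show False
    using key[OF d yS p k d1] key[OF d yS k k d2] by blast
qed

lemma dual_empty:
  assumes r: "r \<ge> 2" and d: "dual_gp_set (GT_V r) (GT_E r) S"
  shows "S = {}"
proof (rule ccontr)
  assume "S \<noteq> {}"
  then obtain c w where yS: "(c, w) \<in> S" by auto
  have yV: "(c, w) \<in> GT_V r" using d yS unfolding dual_gp_set_def gp_set_def by auto
  consider "w = []" | "0 < length w \<and> length w < r" | "length w = r"
    using yV unfolding GT_V_def by fastforce
  then show False
  proof cases
    case 1
    have k: "GT_E r (c, w) (c, [b])" for b
      using 1 r unfolding GT_E_def GT_V_def GT_child_def by auto
    have n: "(c, [b]) \<notin> S" for b
      using internal[OF d, of c "[b]"] r by auto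
    show False using key[OF d yS k k, of True False] n by auto
  next
    case 2 then show False using internal[OF d yS] by auto
  next
    case 3
    have cF: "c = False" using 3 yV unfolding GT_V_def by auto
    have wne: "w \<noteq> []" using 3 r by auto
    have ww: "w = butlast w @ [last w]" using wne by simp
    have k: "GT_E r (c, w) (b, butlast w)" for b
    proof -
      have "GT_child r (b, butlast w) (c, w)"
        unfolding GT_child_def using 3 by (auto intro!: exI[of _ "last w"] simp: wne)
      moreover have "(b, butlast w) \<in> GT_V r" "(c, w) \<in> GT_V r"
        using 3 r yV unfolding GT_V_def by auto
      ultimately show ?thesis unfolding GT_E_def by auto
    qed
    have n: "(b, butlast w) \<notin> S" for b
      using internal[OF d, of b "butlast w"] r 3 by auto
    show False using key[OF d yS k k, of True False] n by auto
  qed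
qed

theorem mainTheorem10:
  fixes r :: nat
  assumes "r \<ge> 2"
  shows "gp_t (GT_V r) (GT_E r) = 0 \<and> gp_d (GT_V r) (GT_E r) = 0"
proof -
  have e1: "total_gp_set (GT_V r) (GT_E r) {}"
    unfolding total_gp_set_def positionable_def by auto
  have e2: "dual_gp_set (GT_V r) (GT_E r) {}"
    unfolding dual_gp_set_def gp_set_def positionable_def by auto
  have t: "total_gp_set (GT_V r) (GT_E r) S \<Longrightarrow> S = {}" for S
    using dual_empty[OF assms, of S]
    unfolding total_gp_set_def dual_gp_set_def gp_set_def by auto
  have "{card S | S. total_gp_set (GT_V r) (GT_E r) S} = {0}"
    using e1 t by force
  moreover have "{card S | S. dual_gp_set (GT_V r) (GT_E r) S} = {0}"
    using e2 dual_empty[OF assms] by force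
  ultimately show ?thesis unfolding gp_t_def gp_d_def by simp
qed

end
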